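(* Let $n>2k$, $k\ge t+3$, and let $\mathcal F\subseteq\binom{[n]}{k}$ be a maximal $t$-intersecting family with $\tau_t(\mathcal F)=t+2$. Suppose there is $T\in\binom{[n]}{t}$ contained in every member of $\mathcal T_t(\mathcal F)$. Then $$|\mathcal T_t(\mathcal F)|\le (k-t)(k-t+1)+1.$$ Moreover, if equality holds, then $\mathcal F\setminus\mathcal F_T=\{G_1,G_2,G_3\}$ with $G_1=A\cup B$, $G_2=A\cup C$, $G_3=(T\cap A)\cup B\cup\{u\}$, where $u\in C$ and $A,B,C$ are pairwise disjoint subsets of $[n]$ with $|A|=t$, $|B|=|C|=k-t$, $|T\cap A|=t-1$ and $T\cap(B\cup C)=\emptyset$.
   Context: A family is $t$-intersecting if any two members meet in at least $t$ elements. A $t$-cover of a family $\mathcal F$ is a set $S\subseteq[n]$ with $|S\cap F|\ge t$ for all $F\in\mathcal F$; $\tau_t(\mathcal F)$ is the minimum size of a $t$-cover, and $\mathcal T_t(\mathcal F)$ denotes the set of all $t$-covers of $\mathcal F$ of size $\tau_t(\mathcal F)$. A $t$-intersecting family $\mathcal F\subseteq\binom{[n]}{k}$ is maximal if no $t$-intersecting subfamily of $\binom{[n]}{k}$ properly contains it. For $A\subseteq[n]$, $\mathcal F_A=\{F\in\mathcal F: A\subseteq F\}$. *)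

theory Defs
  imports Main
begin

definition k_subsets :: "nat \<Rightarrow> nat \<Rightarrow> nat set set" where
  "k_subsets n k = {F. F \<subseteq> {1..n} \<and> card F = k}"

definition t_intersecting :: "nat \<Rightarrow> nat set set \<Rightarrow> bool" where
  "t_intersecting t \<F> \<longleftrightarrow> (\<forall>A\<in>\<F>. \<forall>B\<in>\<F>. t \<le> card (A \<inter> B))"

definition t_cover :: "nat \<Rightarrow> nat \<Rightarrow> nat set set \<Rightarrow> nat set \<Rightarrow> bool" where
  "t_cover n t \<F> S \<longleftrightarrow> S \<subseteq> {1..n} \<and> (\<forall>F\<in>\<F>. t \<le> card (S \<inter> F))"

definition tau :: "nat \<Rightarrow> nat \<Rightarrow> nat set set \<Rightarrow> nat" where
  "tau n t \<F> = (LEAST s. \<exists>S. t_cover n t \<F> S \<and> card S = s)"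

definition min_covers :: "nat \<Rightarrow> nat \<Rightarrow> nat set set \<Rightarrow> nat set set" where
  "min_covers n t \<F> = {S. t_cover n t \<F> S \<and> card S = tau n t \<F>}"

definition maximal_t_intersecting :: "nat \<Rightarrow> nat \<Rightarrow> nat \<Rightarrow> nat set set \<Rightarrow> bool" where
  "maximal_t_intersecting n k t \<F> \<longleftrightarrow>
     \<F> \<subseteq> k_subsets n k \<and> t_intersecting t \<F> \<and>
     (\<forall>\<G>. \<F> \<subset> \<G> \<and> \<G> \<subseteq> k_subsets n k \<longrightarrow> \<not> t_intersecting t \<G>)"

definition star :: "nat set set \<Rightarrow> nat set \<Rightarrow> nat set set" where
  "star \<F> A = {F \<in> \<F>. A \<subseteq> F}"

end

theory Submission imports Defs begin

lemma arith1:
  fixes i j :: nat assumes "1 \<le> i" "1 \<le> j"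
  shows "i*(i+j) + j*j + (i-1)*(j-1) = (i+j-1)*(i+j)+1"
proof -
  obtain a where a: "i = Suc a" using assms by (cases i) auto
  obtain b where b: "j = Suc b" using assms by (cases j) auto
  show ?thesis unfolding a b by (simp add: algebra_simps)
qed

lemma arith2:
  fixes m c :: nat assumes "2 \<le> m" "c \<le> m + 2"
  shows "c choose 2 < m*(m+1)+1"
proof -
  have "c choose 2 = c*(c-1) div 2" by (rule choose_two)
  also have "\<dots> \<le> (m+2)*(m+1) div 2"
    by (rule div_le_mono) (use assms in \<open>intro mult_le_mono; simp\<close>)
  also have "\<dots> < m*(m+1)+1"
  proof -
    obtain q where q: "m = q + 2" using assms by (metis add.commute le_Suc_ex)
    show ?thesis unfolding q by (simp add: algebra_simps)
  qed
  finally show ?thesis .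
qed

lemma two:
  assumes "card Q = 2" "x \<in> Q" "y \<in> Q" "x \<noteq> y"
  shows "Q = {x,y}"
proof -
  have "finite Q" using assms(1) by (intro card_ge_0_finite) simp
  then show ?thesis using card_seteq[of Q "{x,y}"] assms by auto
qed

locale ctx =
  fixes n k t :: nat and F :: "nat set set" and T :: "nat set"
  assumes nk: "n > 2 * k" and kt: "k \<ge> t + 3"
    and maxi: "maximal_t_intersecting n k t F"
    and tau: "tau n t F = t + 2"
    and Tk: "T \<in> k_subsets n t"
    and allT: "\<forall>S \<in> min_covers n t F. T \<subseteq> S"
begin

abbreviation "Gs \<equiv> F - star F T"
abbreviation "Cov \<equiv> min_covers n t F"
abbreviation "P \<equiv> (\<lambda>S. S - T) ` Cov"

lemma memGs: "G \<in> Gs \<longleftrightarrow> G \<in> F \<and> \<not> T \<subseteq> G" by (auto simp: star_def)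

lemma Fk: assumes "G \<in> F" shows "G \<subseteq> {1..n}" "card G = k" "finite G"
proof -
  show 1: "G \<subseteq> {1..n}" "card G = k"
    using maxi assms unfolding maximal_t_intersecting_def k_subsets_def by auto
  show "finite G" using 1(1) by (rule finite_subset) simp
qed

lemma inter: "G \<in> F \<Longrightarrow> G' \<in> F \<Longrightarrow> t \<le> card (G \<inter> G')"
  using maxi by (auto simp: maximal_t_intersecting_def t_intersecting_def)

lemma Tprops: "T \<subseteq> {1..n}" "card T = t" "finite T"
proof -
  show 1: "T \<subseteq> {1..n}" "card T = t" using Tk unfolding k_subsets_def by auto
  show "finite T" using 1(1) by (rule finite_subset) simp
qed

lemma tau_le: assumes "t_cover n t F S" shows "t + 2 \<le> card S"
proof -
  have "tau n t F \<le> card S" unfolding tau_def by (rule Least_le) (use assms in blast)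
  then show ?thesis using tau by simp
qed

lemma cov: assumes "S \<in> Cov" shows "t_cover n t F S" "card S = t+2" "T \<subseteq> S"
  using assms allT tau by (auto simp: min_covers_def)

lemma finCov: "finite Cov"
  by (rule finite_subset[of _ "Pow {1..n}"]) (auto simp: min_covers_def t_cover_def)

lemma cardP: "card P = card Cov"
proof (rule card_image, rule inj_onI)
  fix S S' assume "S \<in> Cov" "S' \<in> Cov" "S - T = S' - T"
  then show "S = S'" using cov(3)[of S] cov(3)[of S'] by blast
qed

lemma finP: "finite P" using finCov by simp

lemma P_elem: assumes "Q \<in> P"
  shows "card Q = 2" "Q \<inter> T = {}" "Q \<subseteq> {1..n}" "finite Q"
    "\<And>G. G \<in> F \<Longrightarrow> t \<le> card (T \<inter> G) + card (Q \<inter> G)"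
proof -
  obtain S where S: "S \<in> Cov" "Q = S - T" using assms by blast
  have sub: "S \<subseteq> {1..n}" using cov(1)[OF S(1)] by (simp add: t_cover_def)
  have fS: "finite S" using sub by (rule finite_subset) simp
  have "card Q = card S - card T" unfolding S(2) by (rule card_Diff_subset[OF Tprops(3) cov(3)[OF S(1)]])
  then show "card Q = 2" using cov(2)[OF S(1)] Tprops(2) by simp
  show "Q \<inter> T = {}" "Q \<subseteq> {1..n}" "finite Q" using S sub fS by auto
  fix G assume G: "G \<in> F"
  have "t \<le> card (S \<inter> G)" using cov(1)[OF S(1)] G by (simp add: t_cover_def)
  also have "S \<inter> G = (T \<inter> G) \<union> (Q \<inter> G)" using S cov(3)[OF S(1)] by blast
  also have "card \<dots> \<le> card (T \<inter> G) + card (Q \<inter> G)" by (rule card_Un_le)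
  finally show "t \<le> card (T \<inter> G) + card (Q \<inter> G)" .
qed

lemma Gs_ne: "Gs \<noteq> {}"
proof
  assume "Gs = {}"
  then have all: "\<forall>G\<in>F. T \<subseteq> G" by (auto simp: star_def)
  have "t_cover n t F T" unfolding t_cover_def
  proof (intro conjI ballI)
    show "T \<subseteq> {1..n}" by (rule Tprops)
    fix G assume "G \<in> F" then have "T \<inter> G = T" using all by blast
    then show "t \<le> card (T \<inter> G)" using Tprops by simp
  qed
  from tau_le[OF this] Tprops(2) show False by simp
qed

lemma Gs_lt: assumes "G \<in> Gs" shows "card (T \<inter> G) < t"
proof (rule ccontr)
  assume "\<not> card (T \<inter> G) < t"
  then have "T \<inter> G = T" using card_seteq[OF Tprops(3), of "T \<inter> G"] Tprops(2) by auto
  then show False using assms memGs by blast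
qed

lemma smallP: assumes "finite Y" "card Y \<le> k - t + 2" "P \<subseteq> {Q. Q \<subseteq> Y \<and> card Q = 2}"
  shows "card P < (k-t)*(k-t+1)+1"
proof -
  have "card P \<le> card {Q. Q \<subseteq> Y \<and> card Q = 2}"
    by (rule card_mono) (use assms in auto)
  also have "\<dots> = card Y choose 2" by (rule n_subsets[OF assms(1)])
  also have "\<dots> < (k-t)*(k-t+1)+1" by (rule arith2) (use assms kt in auto)
  finally show ?thesis .
qed

lemma case1: assumes G0: "G0 \<in> Gs" and lt: "card (T \<inter> G0) + 1 < t"
  shows "card P < (k-t)*(k-t+1)+1"
proof (cases "P = {}")
  case True then show ?thesis by simp
next
  case False
  then obtain Q0 where Q0: "Q0 \<in> P" by blast
  have G0F: "G0 \<in> F" using G0 by simp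
  have sub: "P \<subseteq> {Q. Q \<subseteq> G0 - T \<and> card Q = 2}"
  proof
    fix Q assume Q: "Q \<in> P"
    have "t \<le> card (T \<inter> G0) + card (Q \<inter> G0)" using P_elem(5)[OF Q G0F] .
    then have "2 \<le> card (Q \<inter> G0)" using lt by linarith
    then have "Q \<inter> G0 = Q" using card_seteq[of Q "Q \<inter> G0"] P_elem(1,4)[OF Q] by auto
    then show "Q \<in> {Q. Q \<subseteq> G0 - T \<and> card Q = 2}" using P_elem(1,2)[OF Q] by auto
  qed
  have "card (Q0 \<inter> G0) \<le> 2"
    using card_mono[OF P_elem(4)[OF Q0], of "Q0 \<inter> G0"] P_elem(1)[OF Q0] by auto
  then have lb: "t \<le> card (T \<inter> G0) + 2" using P_elem(5)[OF Q0 G0F] by linarith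
  have "card (G0 - T) = card G0 - card (G0 \<inter> T)"
    by (rule card_Diff_subset_Int) (use Fk(3)[OF G0F] in auto)
  also have "G0 \<inter> T = T \<inter> G0" by blast
  finally have "card (G0 - T) \<le> k - t + 2" using Fk(2)[OF G0F] lb by linarith
  then show ?thesis by (rule smallP[rotated]) (use sub Fk(3)[OF G0F] in auto)
qed

end

locale ctx2 = ctx +
  assumes c2: "\<And>G. G \<in> F - star F T \<Longrightarrow> t \<le> card (T \<inter> G) + 1"
begin

lemma tG: "G \<in> Gs \<Longrightarrow> card (T \<inter> G) + 1 = t"
  using c2 Gs_lt by force

lemma t1: "1 \<le> t" using Gs_ne tG by fastforce

lemma trace_card: assumes G: "G \<in> Gs" shows "card (G - T) = k - t + 1" "finite (G - T)" "G - T \<subseteq> {1..n}"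
proof -
  have GF: "G \<in> F" using G by simp
  have "card (G - T) = card G - card (G \<inter> T)"
    by (rule card_Diff_subset_Int) (use Fk(3)[OF GF] in auto)
  also have "G \<inter> T = T \<inter> G" by blast
  finally show "card (G - T) = k - t + 1" using Fk(2)[OF GF] tG[OF G] kt by linarith
  show "finite (G - T)" "G - T \<subseteq> {1..n}" using Fk[OF GF] by auto
qed

lemma hit: assumes Q: "Q \<in> P" and G: "G \<in> Gs" shows "Q \<inter> (G - T) \<noteq> {}"
proof -
  have "t \<le> card (T \<inter> G) + card (Q \<inter> G)" using P_elem(5)[OF Q] G by simp
  then have "card (Q \<inter> G) \<noteq> 0" using tG[OF G] by linarith
  then have "Q \<inter> G \<noteq> {}" by auto
  then show ?thesis using P_elem(2)[OF Q] by blast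
qed

lemma small: assumes x: "x \<in> {1..n}" "x \<notin> T" shows "\<exists>G\<in>Gs. x \<notin> G"
proof (rule ccontr)
  assume "\<not> ?thesis"
  then have all: "\<And>G. G \<in> Gs \<Longrightarrow> x \<in> G" by blast
  have "t_cover n t F (insert x T)" unfolding t_cover_def
  proof (intro conjI ballI)
    show "insert x T \<subseteq> {1..n}" using x Tprops by auto
    fix G assume GF: "G \<in> F"
    show "t \<le> card (insert x T \<inter> G)"
    proof (cases "T \<subseteq> G")
      case True
      have "card T \<le> card (insert x T \<inter> G)"
        by (rule card_mono) (use True Tprops(3) in auto)
      then show ?thesis using Tprops by simp
    next
      case False
      then have G: "G \<in> Gs" using GF memGs by blast
      have "insert x T \<inter> G = insert x (T \<inter> G)" using all[OF G] by blast
      then have "card (insert x T \<inter> G) = card (T \<inter> G) + 1" using x Tprops(3) by simp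
      then show ?thesis using tG[OF G] by simp
    qed
  qed
  from tau_le[OF this] show False using x Tprops by simp
qed

lemma meet: assumes G: "G \<in> Gs" and G': "G' \<in> Gs" shows "(G - T) \<inter> (G' - T) \<noteq> {}"
proof
  assume e: "(G - T) \<inter> (G' - T) = {}"
  have "t \<le> card (G \<inter> G')" using inter G G' by simp
  also have "G \<inter> G' \<subseteq> T \<inter> G" using e by blast
  then have "card (G \<inter> G') \<le> card (T \<inter> G)" by (rule card_mono[rotated]) (use Tprops(3) in simp)
  finally show False using tG[OF G] by simp
qed

lemma tpart: assumes G: "G \<in> Gs" and G': "G' \<in> Gs" and c: "card ((G - T) \<inter> (G' - T)) \<le> 1"
  shows "T \<inter> G = T \<inter> G'"
proof -
  have fin: "finite (T \<inter> G \<inter> G')" using Tprops(3) by simp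
  have "t \<le> card (G \<inter> G')" using inter G G' by simp
  also have "G \<inter> G' = (T \<inter> G \<inter> G') \<union> ((G - T) \<inter> (G' - T))" by blast
  also have "card \<dots> \<le> card (T \<inter> G \<inter> G') + card ((G - T) \<inter> (G' - T))" by (rule card_Un_le)
  finally have lb: "t \<le> card (T \<inter> G \<inter> G') + 1" using c by linarith
  have 1: "T \<inter> G \<inter> G' = T \<inter> G"
    by (rule card_seteq) (use lb tG[OF G] Tprops(3) in auto)
  have 2: "T \<inter> G \<inter> G' = T \<inter> G'"
    by (rule card_seteq) (use lb tG[OF G'] Tprops(3) in auto)
  show ?thesis using 1 2 by simp
qed

lemma pair:
  assumes G1: "G1 \<in> Gs" and G2: "G2 \<in> Gs" and ne: "G1 - T \<noteq> G2 - T"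
  shows "card P \<le> (k-t)*(k-t+1)+1"
    and "card P = (k-t)*(k-t+1)+1 \<Longrightarrow>
      (card ((G1 - T) \<inter> (G2 - T)) = 1 \<or> card ((G1 - T) - (G2 - T)) = 1) \<and>
      (\<forall>x\<in>(G1 - T) \<inter> (G2 - T). \<exists>G\<in>Gs. x \<notin> G \<and> (\<forall>y\<in>G - T. {x,y} \<in> P)) \<and>
      (\<forall>x\<in>(G1 - T) - (G2 - T). \<forall>y\<in>(G2 - T) - (G1 - T). {x,y} \<in> P)"
proof -
  define X1 where "X1 = G1 - T"
  define X2 where "X2 = G2 - T"
  define I where "I = X1 \<inter> X2"
  define i where "i = card I"
  define j where "j = card (X1 - X2)"
  have c1: "card X1 = k - t + 1" "finite X1" "X1 \<subseteq> {1..n}" using trace_card[OF G1] X1_def by auto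
  have c2: "card X2 = k - t + 1" "finite X2" "X2 \<subseteq> {1..n}" using trace_card[OF G2] X2_def by auto
  have finI: "finite I" using c1 I_def by simp
  have jd: "card (X1 - X2) = card X1 - card I" unfolding I_def
    by (rule card_Diff_subset_Int) (use c1 in simp)
  have jd2: "card (X2 - X1) = card X2 - card I" unfolding I_def
    by (subst Int_commute, rule card_Diff_subset_Int) (use c2 in simp)
  have IleX: "card I \<le> card X1" unfolding I_def by (rule card_mono) (use c1 in auto)
  have ij: "i + j = k - t + 1" using jd IleX c1 i_def j_def by simp
  have j2: "card (X2 - X1) = j" using jd jd2 c1 c2 j_def by simp
  have i1: "1 \<le> i"
  proof -
    have "I \<noteq> {}" using meet[OF G1 G2] X1_def X2_def I_def by simp
    then show ?thesis using finI i_def by (simp add: Suc_le_eq card_gt_0_iff)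
  qed
  have j1: "1 \<le> j"
  proof (rule ccontr)
    assume "\<not> 1 \<le> j"
    then have "card (X1 - X2) = 0" using j_def by simp
    then have "X1 - X2 = {}" using c1 by simp
    then have "X1 \<subseteq> X2" by blast
    then have "X1 = X2" using card_seteq[OF c2(2)] c1 c2 by simp
    then show False using ne X1_def X2_def by simp
  qed
  have "\<forall>x\<in>I. \<exists>G. G \<in> Gs \<and> x \<notin> G"
  proof
    fix x assume "x \<in> I"
    then have "x \<in> {1..n}" "x \<notin> T" using c1 I_def X1_def by auto
    then show "\<exists>G. G \<in> Gs \<and> x \<notin> G" using small by blast
  qed
  then obtain c where c: "\<And>x. x \<in> I \<Longrightarrow> c x \<in> Gs \<and> x \<notin> c x" by metis
  define f :: "nat \<times> nat \<Rightarrow> nat set" where "f = (\<lambda>(x,y). {x,y})"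
  define R1 where "R1 = f ` (SIGMA x:I. c x - T)"
  define R2 where "R2 = f ` ((X1 - X2) \<times> (X2 - X1))"
  define P1 where "P1 = {Q\<in>P. Q \<inter> I \<noteq> {}}"
  define P2 where "P2 = {Q\<in>P. Q \<inter> I = {}}"
  have finSig: "finite (SIGMA x:I. c x - T)" using finI trace_card(2) c by auto
  have cardSig: "card (SIGMA x:I. c x - T) = i * (k - t + 1)"
  proof -
    have "card (SIGMA x:I. c x - T) = (\<Sum>x\<in>I. card (c x - T))"
      using finI trace_card(2) c by simp
    also have "\<dots> = (\<Sum>x\<in>I. k - t + 1)" using trace_card(1) c by simp
    finally show ?thesis using i_def by simp
  qed
  have finR1: "finite R1" using R1_def finSig by simp
  have finR2: "finite R2" using R2_def c1 c2 by simp
  have cR1: "card R1 \<le> i * (k - t + 1)" using card_image_le[OF finSig, of f] cardSig R1_def by simp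
  have cR2: "card R2 \<le> j * j"
    using card_image_le[of "(X1 - X2) \<times> (X2 - X1)" f] c1 c2 R2_def j_def j2
    by (simp add: card_cartesian_product)
  have P1R1: "P1 \<subseteq> R1"
  proof
    fix Q assume Q: "Q \<in> P1"
    then have QP: "Q \<in> P" using P1_def by simp
    obtain x where x: "x \<in> Q" "x \<in> I" using Q P1_def by blast
    obtain y where y: "y \<in> Q" "y \<in> c x - T" using hit[OF QP, of "c x"] c[OF x(2)] by blast
    have "x \<noteq> y" using c[OF x(2)] y by blast
    then have "Q = {x,y}" using two[OF P_elem(1)[OF QP]] x y by blast
    then show "Q \<in> R1" unfolding R1_def f_def using x y by force
  qed
  have P2R2: "P2 \<subseteq> R2"
  proof
    fix Q assume Q: "Q \<in> P2"
    then have QP: "Q \<in> P" using P2_def by simp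
    obtain x where x: "x \<in> Q" "x \<in> X1" using hit[OF QP G1] X1_def by blast
    obtain y where y: "y \<in> Q" "y \<in> X2" using hit[OF QP G2] X2_def by blast
    have xn: "x \<notin> X2" "y \<notin> X1" using x y Q P2_def I_def by auto
    then have "x \<noteq> y" using x by blast
    then have "Q = {x,y}" using two[OF P_elem(1)[OF QP]] x y by blast
    then show "Q \<in> R2" unfolding R2_def f_def using x y xn by force
  qed
  have PU: "P = P1 \<union> P2" "P1 \<inter> P2 = {}" using P1_def P2_def by auto
  have cP: "card P = card P1 + card P2"
    using PU finP card_Un_disjoint[of P1 P2] by (simp add: P1_def P2_def)
  have cP1: "card P1 \<le> card R1" by (rule card_mono[OF finR1 P1R1])
  have cP2: "card P2 \<le> card R2" by (rule card_mono[OF finR2 P2R2])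
  have ar: "i * (k - t + 1) + j * j + (i - 1) * (j - 1) = (k-t)*(k-t+1)+1"
  proof -
    have "i*(i+j) + j*j + (i-1)*(j-1) = (i+j-1)*(i+j)+1" by (rule arith1[OF i1 j1])
    then show ?thesis unfolding ij by simp
  qed
  show "card P \<le> (k-t)*(k-t+1)+1" using cP cP1 cP2 cR1 cR2 ar by linarith
  assume eq: "card P = (k-t)*(k-t+1)+1"
  have e1: "card P1 = card R1" and e2: "card P2 = card R2" and e3: "(i - 1) * (j - 1) = 0"
    using cP cP1 cP2 cR1 cR2 ar eq by linarith+
  have R1P: "R1 \<subseteq> P" using card_seteq[OF finR1 P1R1] e1 P1_def by auto
  have R2P: "R2 \<subseteq> P" using card_seteq[OF finR2 P2R2] e2 P2_def by auto
  show "(card ((G1 - T) \<inter> (G2 - T)) = 1 \<or> card ((G1 - T) - (G2 - T)) = 1) \<and>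
      (\<forall>x\<in>(G1 - T) \<inter> (G2 - T). \<exists>G\<in>Gs. x \<notin> G \<and> (\<forall>y\<in>G - T. {x,y} \<in> P)) \<and>
      (\<forall>x\<in>(G1 - T) - (G2 - T). \<forall>y\<in>(G2 - T) - (G1 - T). {x,y} \<in> P)"
  proof (intro conjI ballI)
    show "card ((G1 - T) \<inter> (G2 - T)) = 1 \<or> card ((G1 - T) - (G2 - T)) = 1"
      using e3 i1 j1 i_def j_def I_def X1_def X2_def by auto
  next
    fix x assume x: "x \<in> (G1 - T) \<inter> (G2 - T)"
    then have xI: "x \<in> I" using I_def X1_def X2_def by simp
    have "\<forall>y\<in>c x - T. {x,y} \<in> P"
    proof
      fix y assume "y \<in> c x - T"
      then have "f (x,y) \<in> R1" unfolding R1_def using xI by blast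
      then show "{x,y} \<in> P" using R1P f_def by auto
    qed
    then show "\<exists>G\<in>Gs. x \<notin> G \<and> (\<forall>y\<in>G - T. {x,y} \<in> P)" using c[OF xI] by blast
  next
    fix x y assume "x \<in> (G1 - T) - (G2 - T)" "y \<in> (G2 - T) - (G1 - T)"
    then have "f (x,y) \<in> R2" unfolding R2_def X1_def X2_def by blast
    then show "{x,y} \<in> P" using R2P f_def by auto
  qed
qed

lemma no_i1:
  assumes eq: "card P = (k-t)*(k-t+1)+1"
    and G1: "G1 \<in> Gs" and G2: "G2 \<in> Gs" and ne: "G1 - T \<noteq> G2 - T"
    and allj: "\<And>G G'. G \<in> Gs \<Longrightarrow> G' \<in> Gs \<Longrightarrow> G - T \<noteq> G' - T \<Longrightarrow> card ((G - T) - (G' - T)) = 1"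
  shows False
proof -
  define X1 where "X1 = G1 - T"
  define X2 where "X2 = G2 - T"
  define Y where "Y = X1 \<union> X2"
  have c1: "card X1 = k - t + 1" "finite X1" "X1 \<subseteq> {1..n}" using trace_card[OF G1] X1_def by auto
  have c2: "card X2 = k - t + 1" "finite X2" "X2 \<subseteq> {1..n}" using trace_card[OF G2] X2_def by auto
  have d12: "card (X1 - X2) = 1" using allj[OF G1 G2 ne] X1_def X2_def by simp
  have "card (X1 - X2) = card X1 - card (X1 \<inter> X2)"
    by (rule card_Diff_subset_Int) (use c1 in simp)
  moreover have "card (X1 \<inter> X2) \<le> card X1" by (rule card_mono) (use c1 in auto)
  ultimately have cI: "card (X1 \<inter> X2) = k - t" using d12 c1(1) by linarith
  have cY: "card Y = k - t + 2" using card_Un_Int[OF c1(2) c2(2)] cI c1 c2 Y_def by simp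
  have finY: "finite Y" using c1 c2 Y_def by simp
  have sub: "P \<subseteq> {Q. Q \<subseteq> Y \<and> card Q = 2}"
  proof
    fix Q assume QP: "Q \<in> P"
    have "Q \<subseteq> Y"
    proof (rule ccontr)
      assume "\<not> Q \<subseteq> Y"
      then obtain z where z: "z \<in> Q" "z \<notin> Y" by blast
      obtain x where x: "x \<in> Q" "x \<in> X1" using hit[OF QP G1] X1_def by blast
      obtain y where y: "y \<in> Q" "y \<in> X2" using hit[OF QP G2] X2_def by blast
      have zx: "Q = {z,x}" using two[OF P_elem(1)[OF QP]] z x Y_def by blast
      have zy: "Q = {z,y}" using two[OF P_elem(1)[OF QP]] z y Y_def by blast
      have "x = y" using zx zy z x y Y_def by auto
      then have w: "x \<in> X1" "x \<in> X2" using x y by auto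
      have "x \<in> {1..n}" "x \<notin> T" using w c1 X1_def by auto
      then obtain G3 where G3: "G3 \<in> Gs" "x \<notin> G3" using small by blast
      define X3 where "X3 = G3 - T"
      have c3: "card X3 = k - t + 1" "finite X3" using trace_card[OF G3(1)] X3_def by auto
      obtain v where v: "v \<in> Q" "v \<in> X3" using hit[OF QP G3(1)] X3_def by blast
      have "v = z" using v zx G3(2) X3_def by auto
      then have zX3: "z \<in> X3" using v by simp
      have n13: "G1 - T \<noteq> G3 - T" using w G3 X1_def by blast
      have n23: "G2 - T \<noteq> G3 - T" using w G3 X2_def by blast
      have d13: "card (X1 - X3) = 1" using allj[OF G1 G3(1) n13] X1_def X3_def by simp
      have d23: "card (X2 - X3) = 1" using allj[OF G2 G3(1) n23] X2_def X3_def by simp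
      have "x \<in> X1 - X3" using w G3 X3_def by auto
      then have "X1 - X3 = {x}" using d13 by (metis card_1_singletonE singletonD)
      then have s1: "X1 - {x} \<subseteq> X3" by blast
      have "x \<in> X2 - X3" using w G3 X3_def by auto
      then have "X2 - X3 = {x}" using d23 by (metis card_1_singletonE singletonD)
      then have s2: "X2 - {x} \<subseteq> X3" by blast
      have s: "Y - {x} \<subseteq> X3" using s1 s2 Y_def by blast
      have "card (Y - {x}) = k - t + 1" using cY w Y_def by (simp add: card_Diff_singleton finY)
      then have "Y - {x} = X3" using card_seteq[OF c3(2) s] c3 by simp
      then show False using zX3 z by blast
    qed
    then show "Q \<in> {Q. Q \<subseteq> Y \<and> card Q = 2}" using P_elem(1)[OF QP] by simp
  qed
  have "card P < (k-t)*(k-t+1)+1" by (rule smallP[OF finY _ sub]) (use cY in simp)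
  then show False using eq by simp
qed

lemma claimE:
  assumes H1: "\<forall>x\<in>X1 - X2. \<forall>y\<in>X2 - X1. {x,y} \<in> P" and E: "E \<in> Gs"
  shows "X1 - X2 \<subseteq> E - T \<or> X2 - X1 \<subseteq> E - T"
proof (rule ccontr)
  assume "\<not> ?thesis"
  then obtain x y where x: "x \<in> X1 - X2" "x \<notin> E - T" and y: "y \<in> X2 - X1" "y \<notin> E - T" by blast
  have "{x,y} \<in> P" using H1 x y by blast
  from hit[OF this E] x y show False by blast
qed

lemma final:
  assumes G1: "G1 \<in> Gs" and G2: "G2 \<in> Gs" and G3: "G3 \<in> Gs"
    and I: "(G1 - T) \<inter> (G2 - T) = {p}" and p3: "p \<notin> G3"
    and H2: "\<forall>y\<in>G3 - T. {p,y} \<in> P"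
    and H1: "\<forall>x\<in>(G1 - T) - (G2 - T). \<forall>y\<in>(G2 - T) - (G1 - T). {x,y} \<in> P"
    and sub3: "(G2 - T) - (G1 - T) \<subseteq> G3 - T"
  shows "\<exists>A B C u. A \<subseteq> {1..n} \<and> B \<subseteq> {1..n} \<and> C \<subseteq> {1..n} \<and>
           A \<inter> B = {} \<and> A \<inter> C = {} \<and> B \<inter> C = {} \<and>
           card A = t \<and> card B = k - t \<and> card C = k - t \<and>
           card (T \<inter> A) + 1 = t \<and> T \<inter> (B \<union> C) = {} \<and> u \<in> C \<and>
           F - star F T = {A \<union> B, A \<union> C, (T \<inter> A) \<union> B \<union> {u}}"
proof -
  define X1 where "X1 = G1 - T"
  define X2 where "X2 = G2 - T"
  define X3 where "X3 = G3 - T"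
  define A' where "A' = X1 - {p}"
  define B' where "B' = X2 - {p}"
  have c1: "card X1 = k - t + 1" "finite X1" "X1 \<subseteq> {1..n}" using trace_card[OF G1] X1_def by auto
  have c2: "card X2 = k - t + 1" "finite X2" "X2 \<subseteq> {1..n}" using trace_card[OF G2] X2_def by auto
  have c3: "card X3 = k - t + 1" "finite X3" "X3 \<subseteq> {1..n}" using trace_card[OF G3] X3_def by auto
  have pX: "p \<in> X1" "p \<in> X2" "p \<notin> T" using I X1_def X2_def by auto
  have A'eq: "A' = X1 - X2" using I A'_def X1_def X2_def by auto
  have B'eq: "B' = X2 - X1" using I B'_def X1_def X2_def by auto
  have cA': "card A' = k - t" using A'_def pX c1 by (simp add: card_Diff_singleton)
  have cB': "card B' = k - t" using B'_def pX c2 by (simp add: card_Diff_singleton)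
  have B'3: "B' \<subseteq> X3" using sub3 B'eq X2_def X1_def X3_def by simp
  have finB': "finite B'" using c2 B'_def by simp
  obtain u where u: "u \<in> X3" "u \<notin> B'"
  proof -
    have "\<not> X3 \<subseteq> B'"
    proof
      assume "X3 \<subseteq> B'"
      then have "card X3 \<le> card B'" using card_mono[OF finB'] by blast
      then show False using c3 cB' by simp
    qed
    then show ?thesis using that by blast
  qed
  have X3eq: "X3 = insert u B'"
  proof -
    have s: "insert u B' \<subseteq> X3" using u B'3 by blast
    have "card (insert u B') = k - t + 1" using u finB' cB' by simp
    then show ?thesis using card_seteq[OF c3(2) s] c3 by simp
  qed
  have up: "u \<noteq> p" using u p3 X3_def by blast
  have uX1: "u \<in> X1"
  proof -
    have "X1 \<inter> X3 \<noteq> {}" using meet[OF G1 G3] X1_def X3_def by simp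
    then show ?thesis using X3eq B'eq by blast
  qed
  have uA': "u \<in> A'" using uX1 up A'_def by simp
  have X13: "X1 \<inter> X3 = {u}" using X3eq B'eq uX1 by blast
  have X12: "X1 \<inter> X2 = {p}" using I X1_def X2_def by simp
  have HE: "\<And>E. E \<in> Gs \<Longrightarrow> X1 - X2 \<subseteq> E - T \<or> X2 - X1 \<subseteq> E - T"
    using claimE H1 X1_def X2_def by blast
  have cls: "\<And>E. E \<in> Gs \<Longrightarrow> E - T = X1 \<or> E - T = X2 \<or> E - T = X3"
  proof -
    fix E assume E: "E \<in> Gs"
    have cE: "card (E - T) = k - t + 1" "finite (E - T)" using trace_card[OF E] by auto
    show "E - T = X1 \<or> E - T = X2 \<or> E - T = X3"
    proof (cases "p \<in> E - T")
      case True
      from HE[OF E] show ?thesis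
      proof
        assume "X1 - X2 \<subseteq> E - T"
        then have s: "X1 \<subseteq> E - T" using True A'eq A'_def by blast
        have "X1 = E - T" using card_seteq[OF cE(2) s] cE c1 by simp
        then show ?thesis by simp
      next
        assume "X2 - X1 \<subseteq> E - T"
        then have s: "X2 \<subseteq> E - T" using True B'eq B'_def by blast
        have "X2 = E - T" using card_seteq[OF cE(2) s] cE c2 by simp
        then show ?thesis by simp
      qed
    next
      case False
      have s: "X3 \<subseteq> E - T"
      proof
        fix y assume y: "y \<in> X3"
        have "{p,y} \<in> P" using H2 y X3_def by simp
        from hit[OF this E] False show "y \<in> E - T" by blast
      qed
      have "X3 = E - T" using card_seteq[OF cE(2) s] cE c3 by simp
      then show ?thesis by simp
    qed
  qed
  define T0 where "T0 = T \<inter> G1"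
  have T2: "T \<inter> G2 = T0" using tpart[OF G1 G2] X12 X1_def X2_def T0_def by simp
  have T3: "T \<inter> G3 = T0" using tpart[OF G1 G3] X13 X1_def X3_def T0_def by simp
  have TE: "\<And>E. E \<in> Gs \<Longrightarrow> T \<inter> E = T0"
  proof -
    fix E assume E: "E \<in> Gs"
    from cls[OF E] show "T \<inter> E = T0"
    proof (elim disjE)
      assume "E - T = X1"
      then have "card ((E - T) \<inter> (G3 - T)) \<le> 1" using X13 X3_def by simp
      then show ?thesis using tpart[OF E G3] T3 by simp
    next
      assume "E - T = X2"
      then have "card ((E - T) \<inter> (G1 - T)) \<le> 1" using X12 X1_def by (simp add: Int_commute)
      then show ?thesis using tpart[OF E G1] T0_def by simp
    next
      assume "E - T = X3"
      then have "card ((E - T) \<inter> (G1 - T)) \<le> 1" using X13 X1_def by (simp add: Int_commute)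
      then show ?thesis using tpart[OF E G1] T0_def by simp
    qed
  qed
  have decomp: "\<And>E. E \<in> Gs \<Longrightarrow> E = T0 \<union> (E - T)" using TE by blast
  have GsEq: "Gs = {T0 \<union> X2, T0 \<union> X1, T0 \<union> X3}"
  proof
    show "Gs \<subseteq> {T0 \<union> X2, T0 \<union> X1, T0 \<union> X3}"
    proof
      fix E assume E: "E \<in> Gs"
      then show "E \<in> {T0 \<union> X2, T0 \<union> X1, T0 \<union> X3}" using cls[OF E] decomp[OF E] by auto
    qed
    show "{T0 \<union> X2, T0 \<union> X1, T0 \<union> X3} \<subseteq> Gs"
      using decomp[OF G1] decomp[OF G2] decomp[OF G3] G1 G2 G3 X1_def X2_def X3_def by auto
  qed
  have cT0: "card T0 + 1 = t" using tG[OF G1] T0_def by simp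
  have T0T: "T0 \<subseteq> T" "finite T0" using T0_def Tprops(3) by auto
  have T0n: "T0 \<subseteq> {1..n}" using T0T Tprops by blast
  define A where "A = insert p T0"
  have TA: "T \<inter> A = T0" using A_def pX T0T by auto
  show ?thesis
  proof (intro exI conjI)
    show "A \<subseteq> {1..n}" using A_def T0n pX c1 by auto
    show "B' \<subseteq> {1..n}" using B'_def c2 by auto
    show "A' \<subseteq> {1..n}" using A'_def c1 by auto
    show "A \<inter> B' = {}" using A_def B'_def X2_def T0T by auto
    show "A \<inter> A' = {}" using A_def A'_def X1_def T0T by auto
    show "B' \<inter> A' = {}" using A'eq B'eq by auto
    have "p \<notin> T0" using T0T pX by blast
    then show "card A = t" using A_def cT0 T0T by simp
    show "card B' = k - t" by (rule cB')
    show "card A' = k - t" by (rule cA')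
    show "card (T \<inter> A) + 1 = t" using TA cT0 by simp
    show "T \<inter> (B' \<union> A') = {}" using A'_def B'_def X1_def X2_def by auto
    show "u \<in> A'" by (rule uA')
    show "F - star F T = {A \<union> B', A \<union> A', T \<inter> A \<union> B' \<union> {u}}"
      unfolding GsEq TA using X3eq A_def A'_def B'_def pX by auto
  qed
qed

lemma main2:
  shows "card P \<le> (k-t)*(k-t+1)+1 \<and> (card P = (k-t)*(k-t+1)+1 \<longrightarrow>
         (\<exists>A B C u. A \<subseteq> {1..n} \<and> B \<subseteq> {1..n} \<and> C \<subseteq> {1..n} \<and>
           A \<inter> B = {} \<and> A \<inter> C = {} \<and> B \<inter> C = {} \<and>
           card A = t \<and> card B = k - t \<and> card C = k - t \<and>
           card (T \<inter> A) + 1 = t \<and> T \<inter> (B \<union> C) = {} \<and> u \<in> C \<and>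
           F - star F T = {A \<union> B, A \<union> C, (T \<inter> A) \<union> B \<union> {u}}))"
proof -
  obtain G1 where G1: "G1 \<in> Gs" using Gs_ne by blast
  have "\<exists>G2\<in>Gs. G2 - T \<noteq> G1 - T"
  proof (rule ccontr)
    assume "\<not> ?thesis"
    then have all: "\<And>G. G \<in> Gs \<Longrightarrow> G - T = G1 - T" by blast
    have "card (G1 - T) \<noteq> 0" using trace_card(1)[OF G1] by simp
    then have "G1 - T \<noteq> {}" by (metis card.empty)
    then obtain x where x: "x \<in> G1 - T" by blast
    then have "x \<in> {1..n}" "x \<notin> T" using trace_card(3)[OF G1] by auto
    then obtain G where G: "G \<in> Gs" "x \<notin> G" using small by blast
    then show False using all[OF G(1)] x by blast
  qed
  then obtain G2 where G2: "G2 \<in> Gs" "G1 - T \<noteq> G2 - T" by metis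
  show ?thesis
  proof (intro conjI impI)
    show "card P \<le> (k-t)*(k-t+1)+1" by (rule pair(1)[OF G1 G2(1) G2(2)])
    assume eq: "card P = (k-t)*(k-t+1)+1"
    have "\<exists>H1\<in>Gs. \<exists>H2\<in>Gs. H1 - T \<noteq> H2 - T \<and> card ((H1 - T) \<inter> (H2 - T)) = 1"
    proof (rule ccontr)
      assume nn: "\<not> ?thesis"
      have "\<And>G G'. G \<in> Gs \<Longrightarrow> G' \<in> Gs \<Longrightarrow> G - T \<noteq> G' - T \<Longrightarrow> card ((G - T) - (G' - T)) = 1"
      proof -
        fix G G' assume a: "G \<in> Gs" "G' \<in> Gs" "G - T \<noteq> G' - T"
        have ne1: "card ((G - T) \<inter> (G' - T)) \<noteq> 1"
        proof
          assume "card ((G - T) \<inter> (G' - T)) = 1"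
          with a have "\<exists>H1\<in>Gs. \<exists>H2\<in>Gs. H1 - T \<noteq> H2 - T \<and> card ((H1 - T) \<inter> (H2 - T)) = 1"
            by (intro bexI[of _ G] bexI[of _ G']) simp_all
          with nn show False by (rule notE)
        qed
        have "card ((G - T) \<inter> (G' - T)) = 1 \<or> card ((G - T) - (G' - T)) = 1"
          using pair(2)[OF a eq] by (rule conjunct1)
        with ne1 show "card ((G - T) - (G' - T)) = 1" by simp
      qed
      then show False using no_i1[OF eq G1 G2(1) G2(2)] by blast
    qed
    then obtain H1 H2 where H: "H1 \<in> Gs" "H2 \<in> Gs" "H1 - T \<noteq> H2 - T"
      "card ((H1 - T) \<inter> (H2 - T)) = 1" by blast
    then obtain p where p: "(H1 - T) \<inter> (H2 - T) = {p}" by (metis card_1_singletonE)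
    note pr = pair(2)[OF H(1,2,3) eq]
    have pr2: "\<forall>x\<in>(H1 - T) \<inter> (H2 - T). \<exists>G\<in>Gs. x \<notin> G \<and> (\<forall>y\<in>G - T. {x,y} \<in> P)"
      using pr by (rule conjunct1[OF conjunct2])
    have "p \<in> (H1 - T) \<inter> (H2 - T)" using p by simp
    from bspec[OF pr2 this] have "\<exists>G\<in>Gs. p \<notin> G \<and> (\<forall>y\<in>G - T. {p,y} \<in> P)" .
    then obtain H3 where H3: "H3 \<in> Gs" "p \<notin> H3" "\<forall>y\<in>H3 - T. {p,y} \<in> P" by blast
    have HH: "\<forall>x\<in>(H1 - T) - (H2 - T). \<forall>y\<in>(H2 - T) - (H1 - T). {x,y} \<in> P"
      using pr by (rule conjunct2[OF conjunct2])
    from claimE[OF HH H3(1)] show "\<exists>A B C u. A \<subseteq> {1..n} \<and> B \<subseteq> {1..n} \<and> C \<subseteq> {1..n} \<and>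
           A \<inter> B = {} \<and> A \<inter> C = {} \<and> B \<inter> C = {} \<and>
           card A = t \<and> card B = k - t \<and> card C = k - t \<and>
           card (T \<inter> A) + 1 = t \<and> T \<inter> (B \<union> C) = {} \<and> u \<in> C \<and>
           F - star F T = {A \<union> B, A \<union> C, (T \<inter> A) \<union> B \<union> {u}}"
    proof
      assume s: "(H1 - T) - (H2 - T) \<subseteq> H3 - T"
      have p': "(H2 - T) \<inter> (H1 - T) = {p}" using p by blast
      have HH': "\<forall>x\<in>(H2 - T) - (H1 - T). \<forall>y\<in>(H1 - T) - (H2 - T). {x,y} \<in> P"
      proof (intro ballI)
        fix x y assume "x \<in> (H2 - T) - (H1 - T)" "y \<in> (H1 - T) - (H2 - T)"
        then have "{y,x} \<in> P" using HH by blast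
        then show "{x,y} \<in> P" by (simp add: insert_commute)
      qed
      show ?thesis by (rule final[OF H(2) H(1) H3(1) p' H3(2) H3(3) HH' s])
    next
      assume s: "(H2 - T) - (H1 - T) \<subseteq> H3 - T"
      show ?thesis by (rule final[OF H(1) H(2) H3(1) p H3(2) H3(3) HH s])
    qed
  qed
qed

end

theorem proposition2p2:
  fixes n k t :: nat and \<F> :: "nat set set" and T :: "nat set"
  assumes "n > 2 * k"
    and "k \<ge> t + 3"
    and "maximal_t_intersecting n k t \<F>"
    and "tau n t \<F> = t + 2"
    and "T \<in> k_subsets n t"
    and "\<forall>S \<in> min_covers n t \<F>. T \<subseteq> S"
  shows "card (min_covers n t \<F>) \<le> (k - t) * (k - t + 1) + 1
    \<and> (card (min_covers n t \<F>) = (k - t) * (k - t + 1) + 1 \<longrightarrow>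
        (\<exists>A B C u. A \<subseteq> {1..n} \<and> B \<subseteq> {1..n} \<and> C \<subseteq> {1..n} \<and>
           A \<inter> B = {} \<and> A \<inter> C = {} \<and> B \<inter> C = {} \<and>
           card A = t \<and> card B = k - t \<and> card C = k - t \<and>
           card (T \<inter> A) + 1 = t \<and> T \<inter> (B \<union> C) = {} \<and> u \<in> C \<and>
           \<F> - star \<F> T = {A \<union> B, A \<union> C, (T \<inter> A) \<union> B \<union> {u}}))"
proof -
  interpret ctx n k t \<F> T by unfold_locales (use assms in auto)
  have cP: "card ((\<lambda>S. S - T) ` min_covers n t \<F>) = card (min_covers n t \<F>)" by (rule cardP)
  show ?thesis
  proof (cases "\<exists>G0\<in>\<F> - star \<F> T. card (T \<inter> G0) + 1 < t")
    case True
    then obtain G0 where "G0 \<in> \<F> - star \<F> T" "card (T \<inter> G0) + 1 < t" by blast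
    from case1[OF this] cP show ?thesis by simp
  next
    case False
    interpret ctx2 n k t \<F> T by unfold_locales (use False in force)
    from main2 cP show ?thesis by simp
  qed
qed

end
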